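(* For all $u_1,u_2\in[0,1]$: (i) $\lim_{\lambda\to\infty}C_\lambda(u_1,u_2)=\max\{u_1+u_2-1,0\}$ (the Fréchet–Hoeffding lower bound); (ii) $\lim_{\lambda\to-\infty}C_\lambda(u_1,u_2)=\min\{u_1,u_2\}$ (the Fréchet–Hoeffding upper bound).
   Context: For $\lambda\in\mathbb{R}$ define $\phi_\lambda$ on $[0,\infty)$ by $\phi_\lambda(x)=\frac{1}{\lambda(\lambda+1)}(x^{\lambda+1}-x+\lambda(1-x))$ for $\lambda\neq-1,0$; $\phi_0(x)=1-x+x\log x$; $\phi_{-1}(x)=x-1-\log x$; values at $x=0$ are limits, so $\phi_\lambda(0)=1/(\lambda+1)$ for $\lambda>-1$ and $\phi_\lambda(0)=\infty$ for $\lambda\le-1$. On $[0,1]$, $\phi_\lambda$ is convex, strictly decreasing, $\phi_\lambda(1)=0$. The pseudoinverse is $\phi_\lambda^{[-1]}(t)=\phi_\lambda^{-1}(t)$ (inverse of $\phi_\lambda|_{[0,1]}$) for $0\le t<\phi_\lambda(0)$ and $0$ for $t\ge\phi_\lambda(0)$. The power-divergence (PD) copula is $C_\lambda(u_1,u_2)=\phi_\lambda^{[-1]}(\phi_\lambda(u_1)+\phi_\lambda(u_2))$, $u_1,u_2\in[0,1]$ (with $\phi_\lambda^{[-1]}(\infty)=0$). *)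

theory Defs
  imports "HOL-Analysis.Analysis" "HOL-Library.Extended_Real"
begin

text \<open>Power-divergence generator on [0,\<infinity>), extended-real valued so that the
  value \<infinity> at x = 0 for lambda \<le> -1 is representable.\<close>
definition pd_phi :: "real \<Rightarrow> real \<Rightarrow> ereal" where
  "pd_phi lam x =
     (if x = 0 then (if lam > -1 then ereal (1 / (lam + 1)) else \<infinity>)
      else if lam = 0 then ereal (1 - x + x * ln x)
      else if lam = -1 then ereal (x - 1 - ln x)
      else ereal ((x powr (lam + 1) - x + lam * (1 - x)) / (lam * (lam + 1))))"

definition pd_phi_pinv :: "real \<Rightarrow> ereal \<Rightarrow> real" where
  "pd_phi_pinv lam t =
     (if 0 \<le> t \<and> t < pd_phi lam 0
      then (THE x. x \<in> {0..1} \<and> pd_phi lam x = t)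
      else 0)"

definition pd_copula :: "real \<Rightarrow> real \<Rightarrow> real \<Rightarrow> real" where
  "pd_copula lam u1 u2 = pd_phi_pinv lam (pd_phi lam u1 + pd_phi lam u2)"

end

theory Submission
  imports Defs "HOL-Real_Asymp.Real_Asymp"
begin

definition FF :: "real \<Rightarrow> real \<Rightarrow> real" where
  "FF lam x = (x powr (lam+1) - x + lam*(1-x))/(lam*(lam+1))"

lemma phi_pos: "x > 0 \<Longrightarrow> lam \<noteq> 0 \<Longrightarrow> lam \<noteq> -1 \<Longrightarrow> pd_phi lam x = ereal (FF lam x)"
  by (simp add: pd_phi_def FF_def)

lemma phi_zero: "lam > 0 \<Longrightarrow> pd_phi lam 0 = ereal (FF lam 0)"
  by (simp add: pd_phi_def FF_def)

lemma FF_dec: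
  assumes "lam \<noteq> 0" "lam \<noteq> -1" "0 < a" "a < b" "b \<le> 1"
  shows "FF lam b < FF lam a"
proof -
  have d: "DERIV (FF lam) x :> ((lam+1) * x powr lam - 1 - lam)/(lam*(lam+1))" if "x > 0" for x
  proof -
    have nz: "lam*(lam+1) \<noteq> 0" using assms by simp
    show ?thesis unfolding FF_def using that nz
    by (auto intro!: derivative_eq_intros simp: divide_simps)
  qed
  obtain z where z: "a < z" "z < b" "FF lam b - FF lam a = (b-a) * (((lam+1) * z powr lam - 1 - lam)/(lam*(lam+1)))"
    using MVT2[OF assms(4), of "FF lam" "\<lambda>x. ((lam+1) * x powr lam - 1 - lam)/(lam*(lam+1))"] d assms by force
  have e: "((lam+1) * z powr lam - 1 - lam)/(lam*(lam+1)) = (z powr lam - 1)/lam"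
  proof -
    have "(lam+1) * z powr lam - 1 - lam = (lam+1)*(z powr lam - 1)" by (simp add: algebra_simps)
    then show ?thesis using assms by simp
  qed
  have "(z powr lam - 1)/lam < 0"
  proof (cases "lam > 0")
    case True
    have "z powr lam < 1" using True z assms powr_less_mono2[of lam z 1] by simp
    then show ?thesis using True by (simp add: divide_neg_pos)
  next
    case False
    then have "lam < 0" using assms by simp
    have "z powr lam > 1" using \<open>lam < 0\<close> z assms powr_less_mono2_neg[of lam z 1] by simp
    then show ?thesis using \<open>lam < 0\<close> by (simp add: divide_pos_neg)
  qed
  moreover have "FF lam b - FF lam a = (b-a) * ((z powr lam - 1)/lam)" using z e by simp
  ultimately have "FF lam b - FF lam a < 0" using assms mult_pos_neg[of "b-a" "(z powr lam - 1)/lam"] by (simp only:)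
  then show ?thesis by simp
qed

lemma ev: fixes r :: real assumes "0 < r" "r < 1"
  shows "eventually (\<lambda>lam. r powr (lam+1) - 3 + lam > 0) at_bot"
  using assms by real_asymp


lemma FF_one: "FF lam 1 = 0" by (simp add: FF_def)

lemma FF_zero: "lam > 0 \<Longrightarrow> FF lam 0 = 1/(lam+1)"
  by (simp add: FF_def)

lemma FF_dec0:
  assumes "lam > 0" "0 < b" "b \<le> 1"
  shows "FF lam b < FF lam 0"
proof -
  have "b powr (lam+1) \<le> b" using assms powr_le_one_le[of b "lam+1"] by simp
  moreover have "b*lam > 0" using assms by simp
  moreover have "lam*(1-b) = lam - b*lam" by (simp add: algebra_simps)
  moreover have z0: "0 powr (lam+1) - 0 + lam*(1-0) = lam" using assms by simp
  ultimately have h: "b powr (lam+1) - b + lam*(1-b) < lam"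
    by linarith
  have D: "lam*(lam+1) > 0" using assms by simp
  have "FF lam b < lam/(lam*(lam+1))" unfolding FF_def
    using divide_strict_right_mono[OF h D] .
  moreover have "lam/(lam*(lam+1)) = FF lam 0" using assms FF_zero by simp
  ultimately show ?thesis by simp
qed

lemma FF_inj_pos:
  assumes "lam \<noteq> 0" "lam \<noteq> -1" "0 < x" "x \<le> 1" "0 < z" "z \<le> 1" "FF lam x = FF lam z"
  shows "x = z"
proof (rule ccontr)
  assume "x \<noteq> z"
  then consider "x < z" | "z < x" by linarith
  then show False
  proof cases
    case 1 then show False using FF_dec[OF assms(1,2), of x z] assms by simp
  next
    case 2 then show False using FF_dec[OF assms(1,2), of z x] assms by simp
  qed
qed

lemma FF_nonneg:
  assumes "lam \<noteq> 0" "lam \<noteq> -1" "0 < x" "x \<le> 1"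
  shows "FF lam x \<ge> 0"
proof (cases "x = 1")
  case True then show ?thesis by (simp add: FF_one)
next
  case False
  then have "x < 1" using assms by simp
  from FF_dec[OF assms(1,2) assms(3) this order_refl] show ?thesis by (simp add: FF_one)
qed

lemma FF_cont:
  assumes "0 < a" "lam \<noteq> 0" "lam \<noteq> -1" shows "continuous_on {a..1} (FF lam)"
proof -
  have c1: "continuous_on {a..1} (\<lambda>x::real. x powr (lam+1))"
    by (rule continuous_on_powr) (use assms in \<open>auto intro: continuous_on_id continuous_on_const\<close>)
  have "continuous_on {a..1} (\<lambda>x. (x powr (lam+1) - x + lam*(1-x))/(lam*(lam+1)))"
    by (rule continuous_on_divide, rule continuous_on_add, rule continuous_on_diff, rule c1,
        rule continuous_on_id, rule continuous_on_mult, rule continuous_on_const,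
        rule continuous_on_diff, rule continuous_on_const, rule continuous_on_id, rule continuous_on_const)
       (use assms in auto)
  then show ?thesis unfolding FF_def .
qed

lemma FF_cont0:
  assumes "lam > 0" shows "continuous_on {0..1} (FF lam)"
proof -
  have c1: "continuous_on {0..1} (\<lambda>x::real. x powr (lam+1))"
    by (rule continuous_on_powr') (use assms in \<open>auto intro: continuous_on_id continuous_on_const\<close>)
  have "continuous_on {0..1} (\<lambda>x. (x powr (lam+1) - x + lam*(1-x))/(lam*(lam+1)))"
    by (rule continuous_on_divide, rule continuous_on_add, rule continuous_on_diff, rule c1,
        rule continuous_on_id, rule continuous_on_mult, rule continuous_on_const,
        rule continuous_on_diff, rule continuous_on_const, rule continuous_on_id, rule continuous_on_const)
       (use assms in auto)
  then show ?thesis unfolding FF_def .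
qed

lemma pinv_eq:
  assumes "0 \<le> t" "t < pd_phi lam 0" "x0 \<in> {0..1}" "pd_phi lam x0 = t"
    "\<And>x. x \<in> {0..1} \<Longrightarrow> pd_phi lam x = t \<Longrightarrow> x = x0"
  shows "pd_phi_pinv lam t = x0"
proof -
  have "(THE x. x \<in> {0..1} \<and> pd_phi lam x = t) = x0"
    by (rule the_equality) (use assms in blast)+
  then show ?thesis unfolding pd_phi_pinv_def using assms(1,2) by simp
qed

lemma FF_bounds:
  assumes "lam > 0" "0 \<le> x" "x \<le> 1"
  shows "1 - x - 1/(lam+1) \<le> lam * FF lam x" "lam * FF lam x \<le> 1 - x"
proof -
  have e: "lam * FF lam x = (1 - x) + (x powr (lam+1) - 1)/(lam+1)"
  proof -
    have "lam * FF lam x = (x powr (lam+1) - x + lam*(1-x))/(lam+1)"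
      unfolding FF_def using assms by simp
    moreover have "x powr (lam+1) - x + lam*(1-x) = (1-x)*(lam+1) + (x powr (lam+1) - 1)"
      by (simp add: algebra_simps)
    ultimately show ?thesis using assms by (simp add: add_divide_distrib)
  qed
  have "0 \<le> x powr (lam+1)" "x powr (lam+1) \<le> 1" using assms by (auto intro: powr_le1)
  then have "-1/(lam+1) \<le> (x powr (lam+1) - 1)/(lam+1)"
    using assms divide_right_mono[of "-1" "x powr (lam+1) - 1" "lam+1"] by simp
  have "(x powr (lam+1) - 1)/(lam+1) \<le> 0"
    using assms \<open>x powr (lam+1) \<le> 1\<close> by (simp add: divide_nonpos_pos)
  then show "1 - x - 1/(lam+1) \<le> lam * FF lam x" "lam * FF lam x \<le> 1 - x"
    using e \<open>-1/(lam+1) \<le> (x powr (lam+1) - 1)/(lam+1)\<close> by linarith+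
qed

lemma phi_01: "lam > 0 \<Longrightarrow> 0 \<le> u \<Longrightarrow> pd_phi lam u = ereal (FF lam u)"
  by (cases "u = 0") (auto simp: phi_zero phi_pos)

lemma part1:
  assumes "lam > 0" "u1 \<in> {0..1}" "u2 \<in> {0..1}"
  defines "L \<equiv> max (u1 + u2 - 1) 0"
  shows "L - 3/(lam+1) \<le> pd_copula lam u1 u2 \<and> pd_copula lam u1 u2 \<le> L + 3/(lam+1)"
proof -
  define t where "t = FF lam u1 + FF lam u2"
  have u: "0 \<le> u1" "u1 \<le> 1" "0 \<le> u2" "u2 \<le> 1" using assms(2,3) by auto
  have sum: "pd_phi lam u1 + pd_phi lam u2 = ereal t"
    using phi_01[OF assms(1) u(1)] phi_01[OF assms(1) u(3)] by (simp add: t_def)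
  have nn: "FF lam u \<ge> 0" if "u \<in> {0..1}" for u
  proof (cases "u = 0")
    case True then show ?thesis using assms FF_zero by simp
  next
    case False then show ?thesis using that assms FF_nonneg[of lam u] by auto
  qed
  have t0: "t \<ge> 0" using nn assms by (simp add: t_def)
  note b1 = FF_bounds[OF assms(1) u(1,2)]
  note b2 = FF_bounds[OF assms(1) u(3,4)]
  have lt: "lam * t = lam * FF lam u1 + lam * FF lam u2" by (simp add: t_def algebra_simps)
  have ip: "1/(lam+1) > 0" using assms by simp
  have Lf: "L \<ge> u1 + u2 - 1" "L \<ge> 0" "L = u1 + u2 - 1 \<or> L = 0"
    "3/(lam+1) = 3*(1/(lam+1))" "2/(lam+1) = 2*(1/(lam+1))"
    unfolding L_def by auto
  show ?thesis
  proof (cases "t < FF lam 0")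
    case True
    obtain x where x: "0 \<le> x" "x \<le> 1" "FF lam x = t"
    proof -
      have "FF lam 1 \<le> t" "t \<le> FF lam 0" "(0::real) \<le> 1" using FF_one t0 True by auto
      from IVT2'[OF this FF_cont0[OF assms(1)]] that show ?thesis by blast
    qed
    have C: "pd_copula lam u1 u2 = x"
      unfolding pd_copula_def sum
    proof (rule pinv_eq)
      show "0 \<le> ereal t" using t0 by simp
      show "ereal t < pd_phi lam 0" using True phi_zero[OF assms(1)] by simp
      show "x \<in> {0..1}" using x by simp
      show "pd_phi lam x = ereal t" using x phi_01[OF assms(1)] by simp
      fix z assume z: "z \<in> {0..1}" "pd_phi lam z = ereal t"
      then have fz: "FF lam z = t" using phi_01[OF assms(1)] by simp
      show "z = x"
      proof (cases "z = 0")
        case True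
        then show ?thesis using fz \<open>t < FF lam 0\<close> by simp
      next
        case False
        have "x \<noteq> 0" using x True FF_zero[OF assms(1)] by auto
        have "lam \<noteq> 0" "lam \<noteq> -1" using assms(1) by auto
        moreover have "0 < z" "z \<le> 1" using z False by auto
        moreover have "0 < x" "x \<le> 1" using x \<open>x \<noteq> 0\<close> by auto
        moreover have "FF lam z = FF lam x" using fz x by simp
        ultimately show ?thesis by (rule FF_inj_pos)
      qed
    qed
    have bx: "1 - x - 1/(lam+1) \<le> lam * t" "lam * t \<le> 1 - x"
      using FF_bounds[OF assms(1) x(1,2)] x(3) by simp_all
    have "1 - x - 1/(lam+1) \<le> 2 - u1 - u2" "2 - u1 - u2 - 2/(lam+1) \<le> 1 - x"
      using bx b1 b2 lt by linarith+
    then show ?thesis unfolding C using ip x(1) Lf by linarith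
  next
    case False
    have C: "pd_copula lam u1 u2 = 0"
      unfolding pd_copula_def sum pd_phi_pinv_def using False phi_zero[OF assms(1)] by simp
    have "lam * t \<ge> lam * FF lam 0" using False assms(1) by simp
    moreover have "lam * FF lam 0 = 1 - 1/(lam+1)" using assms(1) FF_zero by (simp add: field_simps)
    ultimately have "1 - 1/(lam+1) \<le> 2 - u1 - u2" using b1 b2 lt by linarith
    then show ?thesis unfolding C using ip Lf by linarith
  qed
qed


lemma phi_neg0: "lam \<le> -1 \<Longrightarrow> pd_phi lam 0 = \<infinity>"
  by (simp add: pd_phi_def)

lemma phi_not_minf: "pd_phi lam u \<noteq> -\<infinity>"
  by (simp add: pd_phi_def)

lemma zero_case:
  assumes "lam \<le> -1" "u1 = 0 \<or> u2 = 0"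
  shows "pd_copula lam u1 u2 = 0"
proof -
  have "pd_phi lam u1 + pd_phi lam u2 = \<infinity>"
    using assms phi_neg0[OF assms(1)] phi_not_minf[of lam u1] phi_not_minf[of lam u2] by auto
  then show ?thesis unfolding pd_copula_def pd_phi_pinv_def using phi_neg0[OF assms(1)] by simp
qed

lemma FF_big:
  assumes "lam < -1" "0 < a" "a < m" "m \<le> 1" "(a/m) powr (lam+1) - 3 + lam > 0"
  shows "FF lam a > 2 * FF lam m"
proof -
  define q where "q = lam + 1"
  have q: "q < 0" using assms q_def by simp
  have D: "lam*(lam+1) > 0" using assms by (simp add: mult_neg_neg)
  have am: "a = (a/m) * m" using assms by simp
  have aq: "a powr q = (a/m) powr q * m powr q"
    using powr_mult[of "a/m" m q] assms by simp
  have mq: "m powr q \<ge> 1"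
  proof (cases "m = 1")
    case True then show ?thesis by simp
  next
    case False
    then have "m < 1" using assms by simp
    from powr_less_mono2_neg[OF q _ this] assms show ?thesis by simp
  qed
  have rq: "(a/m) powr q > 3 - lam" using assms q_def by simp
  have "(a/m) powr q * m powr q \<ge> (3 - lam) * m powr q"
    using rq mq by (intro mult_right_mono) auto
  moreover have "(1 - lam) * m powr q \<ge> (1 - lam) * 1"
    using mq assms by (intro mult_left_mono) auto
  ultimately have big: "a powr q \<ge> 2 * m powr q + 1 - lam" using aq by (simp add: algebra_simps)
  have n1: "lam * (1 - a) \<ge> lam"
  proof -
    have "lam * a < 0" using assms by (simp add: mult_neg_pos)
    then show ?thesis by (simp add: algebra_simps)
  qed
  have n2: "lam * (1 - m) \<le> 0" using assms by (intro mult_nonpos_nonneg) auto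
  have N: "a powr q - a + lam*(1-a) > 2 * (m powr q - m + lam*(1-m))"
  proof -
    have "a < 1" using assms by simp
    then have "a powr q - a + lam*(1-a) > a powr q - 1 + lam" using n1 by linarith
    moreover have "2*(m powr q - m + lam*(1-m)) \<le> 2 * m powr q" using n2 assms by simp
    ultimately show ?thesis using big by linarith
  qed
  have "2 * FF lam m = (2 * (m powr q - m + lam*(1-m))) / (lam*(lam+1))"
    unfolding FF_def q_def by simp
  also have "\<dots> < (a powr q - a + lam*(1-a)) / (lam*(lam+1))"
    using divide_strict_right_mono[OF N D] .
  also have "\<dots> = FF lam a" unfolding FF_def q_def by simp
  finally show ?thesis .
qed

lemma part2:
  assumes "lam < -1" "u1 \<in> {0<..1}" "u2 \<in> {0<..1}" "0 < a" "a < min u1 u2"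
    "FF lam a > 2 * FF lam (min u1 u2)"
  shows "a \<le> pd_copula lam u1 u2 \<and> pd_copula lam u1 u2 \<le> min u1 u2"
proof -
  define m where "m = min u1 u2"
  have nz: "lam \<noteq> 0" "lam \<noteq> -1" using assms(1) by auto
  have u: "0 < u1" "u1 \<le> 1" "0 < u2" "u2 \<le> 1" using assms(2,3) by auto
  have m: "0 < m" "m \<le> u1" "m \<le> u2" "m \<le> 1" using u m_def by auto
  define t where "t = FF lam u1 + FF lam u2"
  have sum: "pd_phi lam u1 + pd_phi lam u2 = ereal t"
    using phi_pos[OF u(1) nz] phi_pos[OF u(3) nz] by (simp add: t_def)
  have nn1: "FF lam u1 \<ge> 0" using FF_nonneg[OF nz u(1,2)] .
  have nn2: "FF lam u2 \<ge> 0" using FF_nonneg[OF nz u(3,4)] .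
  have le: "FF lam u \<le> FF lam m" if "m \<le> u" "u \<le> 1" for u
  proof (cases "m = u")
    case True then show ?thesis by simp
  next
    case False
    then have "m < u" using that by simp
    from FF_dec[OF nz m(1) this that(2)] show ?thesis by simp
  qed
  have tle: "t \<le> 2 * FF lam m" using le[OF m(2) u(2)] le[OF m(3) u(4)] t_def by simp
  have tlt: "t < FF lam a" using tle assms(6) m_def by simp
  have t0: "t \<ge> 0" using nn1 nn2 t_def by simp
  have a1: "a \<le> 1" using assms(5) u(2) by auto
  obtain x where x: "a \<le> x" "x \<le> 1" "FF lam x = t"
  proof -
    have "FF lam 1 \<le> t" "t \<le> FF lam a" "a \<le> 1" using FF_one t0 tlt a1 by auto
    from IVT2'[OF this FF_cont[OF assms(4) nz]] that show ?thesis by blast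
  qed
  have x0: "0 < x" using x assms(4) by simp
  have C: "pd_copula lam u1 u2 = x"
    unfolding pd_copula_def sum
  proof (rule pinv_eq)
    show "0 \<le> ereal t" using t0 by simp
    show "ereal t < pd_phi lam 0" using phi_neg0[of lam] assms(1) by simp
    show "x \<in> {0..1}" using x x0 by simp
    show "pd_phi lam x = ereal t" using x phi_pos[OF x0 nz] by simp
    fix z assume z: "z \<in> {0..1}" "pd_phi lam z = ereal t"
    have "z \<noteq> 0" using z phi_neg0[of lam] assms(1) by auto
    then have z0: "0 < z" "z \<le> 1" using z by auto
    have "FF lam z = FF lam x" using z(2) phi_pos[OF z0(1) nz] x(3) by simp
    from FF_inj_pos[OF nz z0 x0 x(2) this] show "z = x" .
  qed
  have xu1: "x \<le> u1"
  proof (rule ccontr)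
    assume "\<not> x \<le> u1"
    then have "u1 < x" by simp
    from FF_dec[OF nz u(1) this x(2)] have "FF lam x < FF lam u1" .
    then show False using x(3) nn2 t_def by simp
  qed
  have xu2: "x \<le> u2"
  proof (rule ccontr)
    assume "\<not> x \<le> u2"
    then have "u2 < x" by simp
    from FF_dec[OF nz u(3) this x(2)] have "FF lam x < FF lam u2" .
    then show False using x(3) nn1 t_def by simp
  qed
  show ?thesis unfolding C using x(1) xu1 xu2 by simp
qed

lemma ev_cond:
  assumes "0 < a" "a < m" "m \<le> 1"
  shows "eventually (\<lambda>lam. lam < -1 \<and> FF lam a > 2 * FF lam m) at_bot"
proof -
  have r: "0 < a/m" "a/m < 1" using assms by auto
  show ?thesis using ev[OF r] eventually_gt_at_bot[of "-1::real"]
  proof eventually_elim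
    case (elim lam)
    then show ?case using FF_big[of lam a m] assms by simp
  qed
qed

theorem proposition3:
  fixes u1 u2 :: real
  assumes "u1 \<in> {0..1}" and "u2 \<in> {0..1}"
  shows "((\<lambda>lam. pd_copula lam u1 u2) \<longlongrightarrow> max (u1 + u2 - 1) 0) at_top \<and>
         ((\<lambda>lam. pd_copula lam u1 u2) \<longlongrightarrow> min u1 u2) at_bot"
proof
  define L where "L = max (u1 + u2 - 1) 0"
  show "((\<lambda>lam. pd_copula lam u1 u2) \<longlongrightarrow> max (u1 + u2 - 1) 0) at_top"
    unfolding L_def[symmetric]
  proof (rule tendsto_sandwich[of "\<lambda>lam. L - 3/(lam+1)" _ _ "\<lambda>lam. L + 3/(lam+1)"])
    show "eventually (\<lambda>lam. L - 3/(lam+1) \<le> pd_copula lam u1 u2) at_top"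
      using eventually_gt_at_top[of 0] by eventually_elim (use part1 assms L_def in blast)
    show "eventually (\<lambda>lam. pd_copula lam u1 u2 \<le> L + 3/(lam+1)) at_top"
      using eventually_gt_at_top[of 0] by eventually_elim (use part1 assms L_def in blast)
    show "((\<lambda>lam. L - 3/(lam+1)) \<longlongrightarrow> L) at_top" by real_asymp
    show "((\<lambda>lam. L + 3/(lam+1)) \<longlongrightarrow> L) at_top" by real_asymp
  qed
  show "((\<lambda>lam. pd_copula lam u1 u2) \<longlongrightarrow> min u1 u2) at_bot"
  proof (cases "u1 = 0 \<or> u2 = 0")
    case True
    then have "min u1 u2 = 0" using assms by auto
    moreover have "eventually (\<lambda>lam. pd_copula lam u1 u2 = 0) at_bot"
      using eventually_le_at_bot[of "-1::real"] by eventually_elim (use zero_case True in blast)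
    ultimately show ?thesis by (simp add: tendsto_eventually)
  next
    case False
    then have u: "u1 \<in> {0<..1}" "u2 \<in> {0<..1}" using assms by auto
    define m where "m = min u1 u2"
    have m0: "0 < m" using u m_def by auto
    have m1: "m \<le> 1" using u m_def by auto
    show ?thesis unfolding m_def[symmetric]
    proof (rule order_tendstoI)
      fix y assume "y < m"
      define a where "a = (max y 0 + m)/2"
      have a: "0 < a" "a < m" "y < a" using m0 \<open>y < m\<close> a_def by auto
      show "eventually (\<lambda>lam. y < pd_copula lam u1 u2) at_bot"
        using ev_cond[OF a(1,2) m1]
      proof eventually_elim
        case (elim lam)
        then have "a \<le> pd_copula lam u1 u2" using part2[OF _ u a(1)] a(2) m_def by blast
        then show ?case using a(3) by simp
      qed
    next
      fix y assume "m < y"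
      have a: "0 < m/2" "m/2 < m" using m0 by auto
      show "eventually (\<lambda>lam. pd_copula lam u1 u2 < y) at_bot"
        using ev_cond[OF a(1,2) m1]
      proof eventually_elim
        case (elim lam)
        then have "pd_copula lam u1 u2 \<le> m" using part2[OF _ u a(1)] a(2) m_def by blast
        then show ?case using \<open>m < y\<close> by simp
      qed
    qed
  qed
qed

end
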